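(* In the Setting, it cannot hold simultaneously that $r=\sqrt{K^2-\lambda_2V}$, $r+s=\sqrt{K-\lambda_1}$, $s=-\sqrt{K-\lambda_1}$, $g_2=0$, $g_1=f-c+1$, $f_1=c-1$ and $f_2=g-c$.
   Context: Setting: $\Gamma$ is a primitive strongly regular graph with parameters $(v,k,\lambda,\mu)$ (a $k$-regular graph on $v$ vertices, any two adjacent vertices having $\lambda$ and any two distinct non-adjacent vertices having $\mu$ common neighbours; primitive means $\Gamma$ and its complement are connected), with spectrum $k^1, r^f, s^g$ where $k>r>s$ and exponents are multiplicities. $C$ is a coclique in $\Gamma$ of size $c=\frac{vs}{s-k}$. A $K$-regular graph on $V$ vertices, neither complete nor edgeless, is a divisible design graph with parameters $(V,K,\lambda_1,\lambda_2;m,n)$ if its vertex set can be partitioned into $m$ canonical classes of size $n$ such that two distinct vertices in the same class have exactly $\lambda_1$ common neighbours and two vertices in different classes have exactly $\lambda_2$ common neighbours; it is proper unless $m=1$, $n=1$ or $\lambda_1=\lambda_2$. It is assumed that the subgraph $\Delta$ induced on $V(\Gamma)\setminus C$ is a proper divisible design graph with parameters $(V,K,\lambda_1,\lambda_2;m,n)$. Let $A$ be the adjacency matrix of $\Delta$, $W$ the space of vectors constant on each canonical class and $\mathbf{1}$ the all-ones vector. It is known that $A$ acts on $W^\perp$ with eigenvalues $\pm\sqrt{K-\lambda_1}$, whose multiplicities are denoted $f_1$ (for $+$) and $f_2$ (for $-$), with $f_1+f_2=m(n-1)$, and on $W\cap\mathbf{1}^\perp$ with eigenvalues $\pm\sqrt{K^2-\lambda_2V}$,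 with multiplicities $g_1$ (for $+$) and $g_2$ (for $-$), $g_1+g_2=m-1$. It is also known that the spectrum of $\Delta$ is $(k+s)^1, r^{f-c+1}, (r+s)^{c-1}, s^{g-c}$, with $c<g$. *)

theory Defs
  imports "HOL-Analysis.Analysis" "HOL-Library.Multiset"
begin

definition is_graph :: "('v \<Rightarrow> 'v \<Rightarrow> bool) \<Rightarrow> bool" where
  "is_graph E \<longleftrightarrow> (\<forall>x y. E x y \<longrightarrow> E y x) \<and> (\<forall>x. \<not> E x x)"

definition common_nbrs :: "('v \<Rightarrow> 'v \<Rightarrow> bool) \<Rightarrow> 'v set \<Rightarrow> 'v \<Rightarrow> 'v \<Rightarrow> nat" where
  "common_nbrs E X x y = card {z \<in> X. E x z \<and> E y z}"

definition graph_connected :: "('v \<Rightarrow> 'v \<Rightarrow> bool) \<Rightarrow> 'v set \<Rightarrow> bool" where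
  "graph_connected E X \<longleftrightarrow>
     (\<forall>x\<in>X. \<forall>y\<in>X. (\<lambda>a b. a \<in> X \<and> b \<in> X \<and> E a b)\<^sup>*\<^sup>* x y)"

definition complement_graph :: "('v \<Rightarrow> 'v \<Rightarrow> bool) \<Rightarrow> 'v \<Rightarrow> 'v \<Rightarrow> bool" where
  "complement_graph E x y \<longleftrightarrow> x \<noteq> y \<and> \<not> E x y"

definition srg :: "('v::finite \<Rightarrow> 'v \<Rightarrow> bool) \<Rightarrow> nat \<Rightarrow> nat \<Rightarrow> nat \<Rightarrow> nat \<Rightarrow> bool" where
  "srg E v k lam mu \<longleftrightarrow> is_graph E \<and> CARD('v) = v \<and>
     (\<forall>x. card {y. E x y} = k) \<and>
     (\<forall>x y. x \<noteq> y \<and> E x y \<longrightarrow> common_nbrs E UNIV x y = lam) \<and>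
     (\<forall>x y. x \<noteq> y \<and> \<not> E x y \<longrightarrow> common_nbrs E UNIV x y = mu)"

definition primitive_srg :: "('v::finite \<Rightarrow> 'v \<Rightarrow> bool) \<Rightarrow> nat \<Rightarrow> nat \<Rightarrow> nat \<Rightarrow> nat \<Rightarrow> bool" where
  "primitive_srg E v k lam mu \<longleftrightarrow> srg E v k lam mu \<and>
     graph_connected E UNIV \<and> graph_connected (complement_graph E) UNIV"

definition coclique :: "('v \<Rightarrow> 'v \<Rightarrow> bool) \<Rightarrow> 'v set \<Rightarrow> bool" where
  "coclique E C \<longleftrightarrow> (\<forall>x\<in>C. \<forall>y\<in>C. \<not> E x y)"

definition adj_matrix :: "('v::finite \<Rightarrow> 'v \<Rightarrow> bool) \<Rightarrow> real^'v^'v" where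
  "adj_matrix E = (\<chi> i j. if E i j then 1 else 0)"

text \<open>Adjacency matrix of the subgraph induced on D, acting on vectors supported on D.\<close>
definition induced_adj_matrix :: "('v::finite \<Rightarrow> 'v \<Rightarrow> bool) \<Rightarrow> 'v set \<Rightarrow> real^'v^'v" where
  "induced_adj_matrix E D = (\<chi> i j. if i \<in> D \<and> j \<in> D \<and> E i j then 1 else 0)"

definition supported_on :: "'v::finite set \<Rightarrow> (real^'v) set" where
  "supported_on D = {x. \<forall>i. i \<notin> D \<longrightarrow> x $ i = 0}"

definition ones_on :: "'v::finite set \<Rightarrow> real^'v" where
  "ones_on D = (\<chi> i. if i \<in> D then 1 else 0)"

definition eig_space :: "(real^'v::finite) set \<Rightarrow> real^'v^'v \<Rightarrow> real \<Rightarrow> (real^'v) set" where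
  "eig_space S M \<theta> = {x \<in> S. M *v x = \<theta> *\<^sub>R x}"

definition eig_mult :: "(real^'v::finite) set \<Rightarrow> real^'v^'v \<Rightarrow> real \<Rightarrow> nat" where
  "eig_mult S M \<theta> = dim (eig_space S M \<theta>)"

definition has_spectrum :: "(real^'v::finite) set \<Rightarrow> real^'v^'v \<Rightarrow> real multiset \<Rightarrow> bool" where
  "has_spectrum S M sp \<longleftrightarrow> (\<forall>\<theta>. eig_mult S M \<theta> = count sp \<theta>)"

definition orth_in :: "(real^'v::finite) set \<Rightarrow> (real^'v) set \<Rightarrow> (real^'v) set" where
  "orth_in S X = {x \<in> S. \<forall>w\<in>X. x \<bullet> w = 0}"

text \<open>Vectors supported on D that are constant on each class of P (the space W).\<close>
definition class_const :: "'v::finite set \<Rightarrow> 'v set set \<Rightarrow> (real^'v) set" where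
  "class_const D P = {x \<in> supported_on D. \<forall>B\<in>P. \<forall>i\<in>B. \<forall>j\<in>B. x $ i = x $ j}"

text \<open>The subgraph of E induced on D is a divisible design graph with parameters
  (V,K,lam1,lam2;m,n) with canonical classes P.\<close>
definition ddg_on :: "('v \<Rightarrow> 'v \<Rightarrow> bool) \<Rightarrow> 'v set \<Rightarrow> nat \<Rightarrow> nat \<Rightarrow> nat \<Rightarrow> nat \<Rightarrow> nat \<Rightarrow> nat
    \<Rightarrow> 'v set set \<Rightarrow> bool" where
  "ddg_on E D V K lam1 lam2 m n P \<longleftrightarrow>
     card D = V \<and>
     (\<forall>x\<in>D. card {y \<in> D. E x y} = K) \<and>
     (\<exists>x\<in>D. \<exists>y\<in>D. x \<noteq> y \<and> \<not> E x y) \<and>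
     (\<exists>x\<in>D. \<exists>y\<in>D. E x y) \<and>
     \<Union>P = D \<and> {} \<notin> P \<and>
     (\<forall>B\<in>P. \<forall>B'\<in>P. B \<noteq> B' \<longrightarrow> B \<inter> B' = {}) \<and>
     card P = m \<and> (\<forall>B\<in>P. card B = n) \<and>
     (\<forall>B\<in>P. \<forall>x\<in>B. \<forall>y\<in>B. x \<noteq> y \<longrightarrow> common_nbrs E D x y = lam1) \<and>
     (\<forall>B\<in>P. \<forall>B'\<in>P. B \<noteq> B' \<longrightarrow> (\<forall>x\<in>B. \<forall>y\<in>B'. common_nbrs E D x y = lam2))"

definition proper_ddg_on :: "('v \<Rightarrow> 'v \<Rightarrow> bool) \<Rightarrow> 'v set \<Rightarrow> nat \<Rightarrow> nat \<Rightarrow> nat \<Rightarrow> nat \<Rightarrow> nat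
    \<Rightarrow> nat \<Rightarrow> 'v set set \<Rightarrow> bool" where
  "proper_ddg_on E D V K lam1 lam2 m n P \<longleftrightarrow>
     ddg_on E D V K lam1 lam2 m n P \<and> m \<noteq> 1 \<and> n \<noteq> 1 \<and> lam1 \<noteq> lam2"

end

theory Submission
  imports Defs
begin
lemma boole: "(\<Sum>x\<in>A. if P x then 1 else (0::real)) = real (card {x\<in>A. P x})" if "finite A"
  using that by (simp add: sum.If_cases Int_def)

lemma adj_mv: "(adj_matrix E *v x) $ i = (\<Sum>j\<in>UNIV. (if E i j then 1 else 0) * x $ j)"
  by (simp add: adj_matrix_def matrix_vector_mult_def)

lemma mv_scaleR: "(M::real^'n::finite^'m::finite) *v (c *\<^sub>R x) = c *\<^sub>R (M *v x)"
  by (simp add: vec_eq_iff matrix_vector_mult_def sum_distrib_left algebra_simps)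

lemma lin_part:
  fixes x :: "real^'v::finite"
  shows "(\<Sum>j\<in>UNIV. (real k * (if j = i then 1 else 0) + real lam * (if E i j then 1 else 0)
        + real mu * (1 - (if j = i then 1 else 0) - (if E i j then 1 else 0))) * x $ j)
    = real k * x$i + real lam * (adj_matrix E *v x)$i + real mu * (sum (\<lambda>j. x$j) UNIV - x$i - (adj_matrix E *v x)$i)"
proof -
  have "(\<Sum>j\<in>UNIV. (real k * (if j = i then 1 else 0) + real lam * (if E i j then 1 else 0)
        + real mu * (1 - (if j = i then 1 else 0) - (if E i j then 1 else 0))) * x $ j)
     = (\<Sum>j\<in>UNIV. real k * ((if j = i then 1 else 0) * x$j) + real lam * ((if E i j then 1 else 0) * x$j)
        + real mu * (x$j - (if j = i then 1 else 0) * x$j - (if E i j then 1 else 0) * x$j))"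
    by (rule sum.cong) (simp_all add: algebra_simps)
  also have "\<dots> = real k * (\<Sum>j\<in>UNIV. (if j = i then 1 else 0) * x$j) + real lam * (\<Sum>j\<in>UNIV. (if E i j then 1 else 0) * x$j)
        + real mu * ((\<Sum>j\<in>UNIV. x$j) - (\<Sum>j\<in>UNIV. (if j = i then 1 else 0) * x$j) - (\<Sum>j\<in>UNIV. (if E i j then 1 else 0) * x$j))"
    by (simp only: sum.distrib sum_distrib_left[symmetric] sum_subtractf)
  also have "(\<Sum>j\<in>UNIV. (if j = i then 1 else 0) * x$j) = x$i"
  proof -
    have "(\<Sum>j\<in>UNIV. (if j = i then 1 else 0) * x$j) = (\<Sum>j\<in>UNIV. if j = i then x$j else 0)"
      by (rule sum.cong) auto
    then show ?thesis by simp
  qed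
  also have "(\<Sum>j\<in>UNIV. (if E i j then 1 else 0) * x$j) = (adj_matrix E *v x)$i" by (simp add: adj_mv)
  finally show ?thesis .
qed

lemma srg_basic:
  fixes E :: "'v::finite \<Rightarrow> 'v \<Rightarrow> bool"
  assumes "srg E v k lam mu"
  shows "is_graph E" "\<And>x. card {y. E x y} = k"
     "\<And>x y. x \<noteq> y \<Longrightarrow> E x y \<Longrightarrow> common_nbrs E UNIV x y = lam"
     "\<And>x y. x \<noteq> y \<Longrightarrow> \<not> E x y \<Longrightarrow> common_nbrs E UNIV x y = mu"
     "\<And>a b. E a b = E b a" "\<And>a. \<not> E a a" "CARD('v) = v"
  using assms unfolding srg_def is_graph_def by blast+

lemma srg_sq:
  fixes E :: "'v::finite \<Rightarrow> 'v \<Rightarrow> bool"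
  assumes "srg E v k lam mu"
  shows "(adj_matrix E *v (adj_matrix E *v x)) $ i =
     real k * x$i + real lam * (adj_matrix E *v x)$i + real mu * (sum (\<lambda>j. x$j) UNIV - x$i - (adj_matrix E *v x)$i)"
proof -
  note G = srg_basic[OF assms]
  have N: "(\<Sum>z\<in>UNIV. (if E i z then 1 else 0) * (if E z j then 1 else (0::real)))
      = real k * (if j = i then 1 else 0) + real lam * (if E i j then 1 else 0)
        + real mu * (1 - (if j = i then 1 else 0) - (if E i j then 1 else 0))" for j
  proof -
    have "(\<Sum>z\<in>UNIV. (if E i z then 1 else 0) * (if E z j then 1 else (0::real)))
        = (\<Sum>z\<in>UNIV. if E i z \<and> E j z then 1 else 0)"
      by (rule sum.cong) (auto simp: G(5)[of _ j])
    also have "\<dots> = real (common_nbrs E UNIV i j)"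
      by (simp add: boole common_nbrs_def)
    also have "\<dots> = real k * (if j = i then 1 else 0) + real lam * (if E i j then 1 else 0)
        + real mu * (1 - (if j = i then 1 else 0) - (if E i j then 1 else 0))"
      using G(2) G(3)[of i j] G(4)[of i j] G(6)[of i] by (cases "j = i") (auto simp: common_nbrs_def)
    finally show ?thesis .
  qed
  have "(adj_matrix E *v (adj_matrix E *v x)) $ i =
      (\<Sum>z\<in>UNIV. (if E i z then 1 else 0) * (\<Sum>j\<in>UNIV. (if E z j then 1 else 0) * x $ j))"
    by (simp add: adj_mv)
  also have "\<dots> = (\<Sum>j\<in>UNIV. (\<Sum>z\<in>UNIV. (if E i z then 1 else 0) * (if E z j then 1 else (0::real))) * x $ j)"
    apply (simp only: sum_distrib_left sum_distrib_right mult.assoc)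
    apply (rule sum.swap)
    done
  also have "\<dots> = (\<Sum>j\<in>UNIV. (real k * (if j = i then 1 else 0) + real lam * (if E i j then 1 else 0)
        + real mu * (1 - (if j = i then 1 else 0) - (if E i j then 1 else 0))) * x $ j)"
    by (simp only: N)
  also have "\<dots> = real k * x$i + real lam * (adj_matrix E *v x)$i + real mu * (sum (\<lambda>j. x$j) UNIV - x$i - (adj_matrix E *v x)$i)"
    by (rule lin_part)
  finally show ?thesis .
qed

lemma srg_rowsum:
  fixes E :: "'v::finite \<Rightarrow> 'v \<Rightarrow> bool"
  assumes "srg E v k lam mu"
  shows "sum (\<lambda>i. (adj_matrix E *v x) $ i) UNIV = real k * sum (\<lambda>j. x$j) UNIV"
proof -
  note G = srg_basic[OF assms]
  have "sum (\<lambda>i. (adj_matrix E *v x) $ i) UNIV = (\<Sum>i\<in>UNIV. \<Sum>j\<in>UNIV. (if E i j then 1 else 0) * x $ j)"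
    by (simp add: adj_mv)
  also have "\<dots> = (\<Sum>j\<in>UNIV. (\<Sum>i\<in>UNIV. (if E i j then 1 else (0::real))) * x $ j)"
    apply (simp only: sum_distrib_right)
    apply (rule sum.swap)
    done
  also have "\<dots> = (\<Sum>j\<in>UNIV. real k * x $ j)"
  proof (rule sum.cong)
    fix j :: 'v
    have "(\<Sum>i\<in>UNIV. (if E i j then 1 else (0::real))) = real (card {i\<in>UNIV. E i j})"
      by (simp add: boole)
    also have "{i\<in>UNIV. E i j} = {i. E j i}" using G(5) by auto
    finally show "(\<Sum>i\<in>UNIV. (if E i j then 1 else (0::real))) * x $ j = real k * x $ j"
      using G(2) by simp
  qed simp
  finally show ?thesis by (simp add: sum_distrib_left)
qed

lemma srg_eig:
  fixes E :: "'v::finite \<Rightarrow> 'v \<Rightarrow> bool"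
  assumes "srg E v k lam mu" "adj_matrix E *v x = \<theta> *\<^sub>R x" "x \<noteq> 0" "\<theta> \<noteq> real k"
  shows "\<theta>^2 = real k + real lam * \<theta> - real mu - real mu * \<theta>"
proof -
  have "sum (\<lambda>i. (adj_matrix E *v x) $ i) UNIV = \<theta> * sum (\<lambda>j. x$j) UNIV"
    using assms(2) by (simp add: sum_distrib_left)
  with srg_rowsum[OF assms(1), of x] have A: "\<theta> * sum (\<lambda>j. x$j) UNIV = real k * sum (\<lambda>j. x$j) UNIV"
    by simp
  have "(\<theta> - real k) * sum (\<lambda>j. x$j) UNIV = 0" using A by (simp add: left_diff_distrib)
  with assms(4) have S: "sum (\<lambda>j. x$j) UNIV = 0" by simp
  obtain i where xi: "x $ i \<noteq> 0" using assms(3) by (auto simp: vec_eq_iff)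
  have "(adj_matrix E *v (adj_matrix E *v x)) $ i = \<theta>^2 * x $ i"
    using assms(2) by (simp add: mv_scaleR power2_eq_square)
  with srg_sq[OF assms(1), of x i] assms(2) S
  have "\<theta>^2 * x $ i = (real k + real lam * \<theta> - real mu - real mu * \<theta>) * x $ i"
    by (simp add: algebra_simps power2_eq_square)
  with xi show ?thesis by simp
qed

lemma srg_ones:
  fixes E :: "'v::finite \<Rightarrow> 'v \<Rightarrow> bool"
  assumes "srg E v k lam mu"
  shows "real k ^ 2 = real k + real lam * real k + real mu * (real v - 1 - real k)"
proof -
  note G = srg_basic[OF assms]
  define o1 :: "real^'v" where "o1 = (\<chi> i. 1)"
  have M1: "adj_matrix E *v o1 = real k *\<^sub>R o1"
  proof -
    have "(adj_matrix E *v o1) $ i = real k" for i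
    proof -
      have "(adj_matrix E *v o1) $ i = (\<Sum>j\<in>UNIV. if E i j then 1 else 0)"
        by (simp add: adj_mv o1_def)
      also have "\<dots> = real (card {j\<in>UNIV. E i j})" by (simp add: boole)
      finally show ?thesis using G(2) by simp
    qed
    then show ?thesis by (simp add: vec_eq_iff o1_def)
  qed
  obtain i :: 'v where True by simp
  have "(adj_matrix E *v (adj_matrix E *v o1)) $ i = real k ^ 2"
    using M1 by (simp add: mv_scaleR power2_eq_square o1_def)
  moreover have "sum (\<lambda>j. o1$j) UNIV = real v" using G(7) by (simp add: o1_def)
  ultimately show ?thesis using srg_sq[OF assms, of o1 i] M1 by (simp add: o1_def)
qed

lemma eig_mult_pos:
  fixes S :: "(real^'n::finite) set" and M :: "real^'n^'n"
  assumes "x \<in> S" "M *v x = \<theta> *\<^sub>R x" "x \<noteq> 0"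
  shows "eig_mult S M \<theta> \<ge> 1"
proof -
  have "\<not> eig_space S M \<theta> \<subseteq> {0}" using assms unfolding eig_space_def by auto
  then have a: "dim (eig_space S M \<theta>) \<noteq> 0" by (metis dim_eq_0)
  show ?thesis unfolding eig_mult_def using a by linarith
qed

lemma eig_vec_exists:
  fixes S :: "(real^'n::finite) set" and M :: "real^'n^'n"
  assumes "eig_mult S M \<theta> \<ge> 1"
  obtains x where "x \<in> S" "M *v x = \<theta> *\<^sub>R x" "x \<noteq> 0"
proof -
  have "dim (eig_space S M \<theta>) \<ge> 1" using assms unfolding eig_mult_def .
  then have "dim (eig_space S M \<theta>) \<noteq> 0" by linarith
  then have "\<not> eig_space S M \<theta> \<subseteq> {0}" by (metis dim_eq_0)
  then show ?thesis using that unfolding eig_space_def by auto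
qed
lemma ddg_ones:
  assumes "ddg_on E D V K lam1 lam2 m n P"
  shows "induced_adj_matrix E D *v ones_on D = real K *\<^sub>R ones_on (D::'v::finite set)"
proof -
  have deg0: "\<forall>x\<in>D. card {y \<in> D. E x y} = K" using assms by (simp add: ddg_on_def)
  have deg: "\<And>x. x \<in> D \<Longrightarrow> card {y \<in> D. E x y} = K" using deg0 by blast
  have "(induced_adj_matrix E D *v ones_on D) $ i = real K * ones_on D $ i" for i
  proof -
    have "(induced_adj_matrix E D *v ones_on D) $ i = (\<Sum>j\<in>UNIV. if i \<in> D \<and> j \<in> D \<and> E i j then 1 else 0)"
      unfolding induced_adj_matrix_def ones_on_def matrix_vector_mult_def
      by (simp, rule sum.cong, auto)
    also have "\<dots> = real (card {j\<in>UNIV. i \<in> D \<and> j \<in> D \<and> E i j})" by (simp add: boole)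
    also have "\<dots> = real K * ones_on D $ i"
    proof (cases "i \<in> D")
      case True
      have "{j\<in>UNIV. i \<in> D \<and> j \<in> D \<and> E i j} = {y \<in> D. E i y}" using True by auto
      then show ?thesis using deg[OF True] True by (simp add: ones_on_def)
    next
      case False
      then show ?thesis by (simp add: ones_on_def)
    qed
    finally show ?thesis .
  qed
  then show ?thesis by (simp add: vec_eq_iff)
qed

lemma arith_Vmu:
  fixes k t mu vv c V :: real
  assumes "t > 0" "k > 2*t" "vv * mu = (k-2*t)*(k+t)" "c*(k+t) = vv * t" "V = vv - c"
  shows "V*mu = k*(k-2*t)"
proof -
  have "V*mu*(k+t) = vv * mu*(k+t) - c*(k+t)*mu" unfolding assms(5) by (simp add: algebra_simps)
  also have "\<dots> = (k-2*t)*(k+t)*(k+t) - vv * t * mu" using assms(3,4) by simp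
  also have "vv * t * mu = t*(k-2*t)*(k+t)"
  proof -
    have "vv * t * mu = t * (vv * mu)" by (simp add: algebra_simps)
    also have "\<dots> = t * ((k-2*t)*(k+t))" by (simp only: assms(3))
    finally show ?thesis by (simp add: algebra_simps)
  qed
  finally have "V*mu*(k+t) = (k*(k-2*t))*(k+t)" by (simp add: algebra_simps)
  moreover have "k + t \<noteq> 0" using assms(1,2) by simp
  ultimately show ?thesis by simp
qed

lemma arith_beta:
  fixes k t mu V K l1 l2 :: real
  assumes "V*mu = k*(k-2*t)" "mu = k - 2*t^2" "K = k - t" "l1 = K - t^2" "l2*V = K^2 - 4*t^2"
  shows "(l1 - l2 - t^2 + t) * (k*(k-2*t)) = 3*t^2*mu"
proof -
  have "(l1 - l2 - t^2 + t) * (k*(k-2*t)) = (l1 - t^2 + t)*(V*mu) - (l2*V)*mu"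
    unfolding assms(1)[symmetric] by (simp add: algebra_simps)
  also have "\<dots> = mu * (k*(k-2*t)) - (K^2 - 4*t^2)*mu"
  proof -
    have "l1 - t^2 + t = mu" using assms(2,3,4) by simp
    then show ?thesis by (simp only: assms(1) assms(5))
  qed
  also have "\<dots> = 3*t^2*mu" unfolding assms(3) by (simp add: algebra_simps power2_eq_square)
  finally show ?thesis .
qed

lemma arith_final:
  fixes k t mu b :: real
  assumes "t \<ge> 2" "mu > 0" "mu = k - 2*t^2" "b \<ge> 1" "b * (k*(k-2*t)) = 3*t^2*mu" "k > 2*t"
  shows False
proof -
  have kk: "k*(k-2*t) > 0" using assms(6) assms(1) by (simp add: mult_pos_pos)
  have "k*(k-2*t) \<le> b * (k*(k-2*t))" using kk assms(4) by (simp add: mult_le_cancel_right1)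
  then have le: "k*(k-2*t) \<le> 3*t^2*mu" using assms(5) by simp
  have id: "k*(k-2*t) - 3*t^2*mu = 4*t^3*(t-1) + mu*(t*(t-2)) + mu^2"
  proof -
    have kdef: "k = mu + 2*t^2" using assms(3) by simp
    show ?thesis unfolding kdef by (simp add: algebra_simps power2_eq_square power3_eq_cube)
  qed
  have "4*t^3*(t-1) > 0" using assms(1) by simp
  moreover have "mu*(t*(t-2)) \<ge> 0" using assms(1,2) by simp
  moreover have "mu^2 > 0" using assms(2) by simp
  ultimately have "k*(k-2*t) - 3*t^2*mu > 0" using id by linarith
  with le show False by linarith
qed

lemma sqrt_pos_sq: "sqrt x = t \<Longrightarrow> t > 0 \<Longrightarrow> t^2 = x"
  by (metis real_sqrt_gt_0_iff real_sqrt_pow2 less_imp_le)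

lemma rtranclp_false: "(\<lambda>a b. False)\<^sup>*\<^sup>* x y \<Longrightarrow> x = y"
  by (induct rule: rtranclp.induct) auto

theorem mainTheorem5:
  fixes E :: "'v::finite \<Rightarrow> 'v \<Rightarrow> bool"
    and v k lam mu f g :: nat and r s :: real
    and C :: "'v set" and P :: "'v set set"
    and V K lam1 lam2 m n :: nat
  defines "c \<equiv> card C"
  defines "D \<equiv> UNIV - C"
  defines "A \<equiv> induced_adj_matrix E D"
  defines "W \<equiv> class_const D P"
  defines "Wp \<equiv> orth_in (supported_on D) W"
  defines "W1 \<equiv> {x \<in> W. x \<bullet> ones_on D = 0}"
  defines "f1 \<equiv> eig_mult Wp A (sqrt (real K - real lam1))"
    and "f2 \<equiv> eig_mult Wp A (- sqrt (real K - real lam1))"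
    and "g1 \<equiv> eig_mult W1 A (sqrt ((real K)\<^sup>2 - real lam2 * real V))"
    and "g2 \<equiv> eig_mult W1 A (- sqrt ((real K)\<^sup>2 - real lam2 * real V))"
  assumes prim: "primitive_srg E v k lam mu"
    and spec_Gamma: "has_spectrum UNIV (adj_matrix E)
                       ({#real k#} + replicate_mset f r + replicate_mset g s)"
    and order: "real k > r" "r > s"
    and cocl: "coclique E C"
    and c_size: "real c = real v * s / (s - real k)"
    and ddg: "proper_ddg_on E D V K lam1 lam2 m n P"
    \<comment> \<open>known facts listed in the Setting\<close>
    and Wp_eigs: "\<forall>x\<in>Wp. A *v x \<in> Wp"
                 "\<forall>\<theta>. eig_space Wp A \<theta> \<noteq> {0} \<longrightarrow>
                       \<theta> = sqrt (real K - real lam1) \<or> \<theta> = - sqrt (real K - real lam1)"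
                 "f1 + f2 = m * (n - 1)"
    and W1_eigs: "\<forall>x\<in>W1. A *v x \<in> W1"
                 "\<forall>\<theta>. eig_space W1 A \<theta> \<noteq> {0} \<longrightarrow>
                       \<theta> = sqrt ((real K)\<^sup>2 - real lam2 * real V) \<or>
                       \<theta> = - sqrt ((real K)\<^sup>2 - real lam2 * real V)"
                 "g1 + g2 = m - 1"
    and spec_Delta: "has_spectrum (supported_on D) A
                       ({#real k + s#} + replicate_mset (f + 1 - c) r
                        + replicate_mset (c - 1) (r + s) + replicate_mset (g - c) s)"
    and c_lt_g: "c < g"
  shows "\<not> (r = sqrt ((real K)\<^sup>2 - real lam2 * real V) \<and>
            r + s = sqrt (real K - real lam1) \<and>
            s = - sqrt (real K - real lam1) \<and>
            g2 = 0 \<and> g1 = f + 1 - c \<and> f1 = c - 1 \<and> f2 = g - c)"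
proof
  assume H: "r = sqrt ((real K)\<^sup>2 - real lam2 * real V) \<and>
            r + s = sqrt (real K - real lam1) \<and>
            s = - sqrt (real K - real lam1) \<and>
            g2 = 0 \<and> g1 = f + 1 - c \<and> f1 = c - 1 \<and> f2 = g - c"
  have srgE: "srg E v k lam mu" using prim unfolding primitive_srg_def by blast
  note G = srg_basic[OF srgE]
  have conn: "graph_connected (complement_graph E) UNIV" using prim unfolding primitive_srg_def by blast
  have ddg0: "ddg_on E D V K lam1 lam2 m n P" and m1: "m \<noteq> 1" and l12: "lam1 \<noteq> lam2"
    using ddg by (simp_all add: proper_ddg_on_def)
  have cardD: "card D = V" using ddg0 by (simp add: ddg_on_def)
  have Dne0: "\<exists>x\<in>D. \<exists>y\<in>D. E x y" using ddg0 by (simp add: ddg_on_def)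
  then have Dne: "\<exists>x. x \<in> D" by blast
  have UP: "\<Union>P = D" using ddg0 by (simp add: ddg_on_def)
  have cP: "card P = m" using ddg0 by (simp add: ddg_on_def)
  define t where "t = - s"
  have ht: "sqrt (real K - real lam1) = t" using H t_def by simp
  have r2t: "r = 2*t" using H ht t_def by linarith
  have tpos: "t > 0" using order(2) r2t t_def by linarith
  have t2: "t^2 = real K - real lam1" using sqrt_pos_sq[OF ht tpos] .
  have rsq0: "sqrt ((real K)\<^sup>2 - real lam2 * real V) = 2*t" using H r2t by simp
  have rsq: "(2*t)^2 = (real K)\<^sup>2 - real lam2 * real V"
    by (rule sqrt_pos_sq[OF rsq0]) (use tpos in simp)
  have "CARD('v) > 0" by (simp add: card_gt_0_iff)
  then have vpos: "real v > 0" using G(7) by simp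
  have kpos: "real k > 2*t" using order(1) r2t by simp
  have cs: "real c * (- t - real k) = real v * (- t)"
    using c_size t_def kpos tpos by (simp add: field_simps)
  have cvt: "real c * (real k + t) = real v * t" using cs by (simp add: algebra_simps)
  have cpos: "c \<ge> 1"
  proof (rule ccontr)
    assume "\<not> c \<ge> 1" then have "c = 0" by simp
    with cvt have "real v * t = 0" by simp
    with vpos tpos show False by simp
  qed
  have cle: "c \<le> v" unfolding c_def using G(7) card_mono[of UNIV C] by simp
  have VvC: "real V = real v - real c"
  proof -
    have "card D = card (UNIV::'v set) - card C" unfolding D_def by (simp add: card_Diff_subset)
    then show ?thesis using cardD cle G(7) c_def by simp
  qed
  have mpos: "m \<ge> 2"
  proof -
    have "P \<noteq> {}" using UP Dne by auto
    moreover have "finite P" by simp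
    ultimately have "m \<noteq> 0" using cP by auto
    with m1 show ?thesis by simp
  qed
  have fpos: "f \<ge> 1" using H W1_eigs(3) mpos cpos by simp
  have gpos: "g \<ge> 1" using c_lt_g by simp
  have specG: "\<And>\<theta>. eig_mult UNIV (adj_matrix E) \<theta> = count ({#real k#} + replicate_mset f r + replicate_mset g s) \<theta>"
    using spec_Gamma unfolding has_spectrum_def by blast
  have "eig_mult UNIV (adj_matrix E) r \<ge> 1" using specG[of r] fpos order by simp
  then obtain xr where xr: "adj_matrix E *v xr = r *\<^sub>R xr" "xr \<noteq> 0" by (rule eig_vec_exists)
  have er: "r^2 = real k + real lam * r - real mu - real mu * r"
    using srg_eig[OF srgE xr] order by simp
  have "eig_mult UNIV (adj_matrix E) s \<ge> 1" using specG[of s] gpos order by simp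
  then obtain xs where xs: "adj_matrix E *v xs = s *\<^sub>R xs" "xs \<noteq> 0" by (rule eig_vec_exists)
  have es: "s^2 = real k + real lam * s - real mu - real mu * s"
    using srg_eig[OF srgE xs] order by simp
  have e1: "(real k)^2 = real k + real lam * real k + real mu * (real v - 1 - real k)"
    using srg_ones[OF srgE] .
  have "3*t*(real lam - real mu - t) = 0"
  proof -
    have a: "4*t^2 = real k + real lam * (2*t) - real mu - real mu * (2*t)" using er r2t by (simp add: power2_eq_square)
    have b: "t^2 = real k - real lam * t - real mu + real mu * t" using es t_def by (simp add: power2_eq_square)
    have "3*t*(real lam - real mu - t) = (real k + real lam * (2*t) - real mu - real mu * (2*t)) - (real k - real lam * t - real mu + real mu * t) - 3*t^2"
      by (simp add: algebra_simps power2_eq_square)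
    also have "\<dots> = 0" unfolding a[symmetric] b[symmetric] by simp
    finally show ?thesis .
  qed
  then have lmt: "real lam - real mu = t" using tpos by simp
  have kmu: "real mu = real k - 2*t^2"
  proof -
    have b: "t^2 = real k - real lam * t - real mu + real mu * t" using es t_def by (simp add: power2_eq_square)
    have "real lam * t - real mu * t = t * t" using lmt by (metis left_diff_distrib mult.commute)
    then have c: "real lam * t - real mu * t = t^2" by (simp add: power2_eq_square)
    from b c show ?thesis by linarith
  qed
  have vmu: "real v * real mu = (real k - 2*t)*(real k + t)"
  proof -
    have "real v * real mu = (real k)^2 - real k - real lam * real k + real mu + real mu * real k"
      using e1 by (simp add: algebra_simps)
    also have "real lam * real k = real mu * real k + t * real k" using lmt by (simp add: algebra_simps)
    finally show ?thesis unfolding kmu by (simp add: algebra_simps power2_eq_square)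
  qed
  define T where "T = int lam - int mu"
  have tT: "t = real_of_int T" using lmt unfolding T_def by simp
  have T1: "T \<ge> 1" using tpos tT by simp
  show False
  proof (cases "T = 1")
    case True
    then have t1: "t = 1" using tT by simp
    have "real v * (real k - 2) = (real k - 2) * (real k + 1)" using vmu kmu t1 by simp
    then have "(real k - 2) * (real v - (real k + 1)) = 0" by (simp add: algebra_simps)
    moreover have "real k - 2 \<noteq> 0" using kpos t1 by simp
    ultimately have "real v = real k + 1" by simp
    then have vk: "v = k + 1" by linarith
    have adj: "E x y" if "x \<noteq> y" for x y
    proof -
      have sub: "{z. E x z} \<subseteq> UNIV - {x}" using G(6) by auto
      have "card (UNIV - {x}) = v - 1" using G(7) by (simp add: card_Diff_subset)
      then have "card {z. E x z} = card (UNIV - {x})" using G(2) vk by simp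
      then have "{z. E x z} = UNIV - {x}" using sub by (simp add: card_subset_eq)
      then show ?thesis using that by auto
    qed
    obtain x :: 'v where True by simp
    have cdx: "card (UNIV - {x}) = v - 1" using G(7) by (simp add: card_Diff_subset)
    have "k \<ge> 3" using kpos t1 by simp
    then have "card (UNIV - {x}) \<noteq> 0" using cdx vk by simp
    then have "UNIV - {x} \<noteq> {}" by (metis card.empty)
    then obtain y where y: "y \<noteq> x" by auto
    have "(\<lambda>a b. a \<in> UNIV \<and> b \<in> UNIV \<and> complement_graph E a b) = (\<lambda>a b. False)"
      using adj by (auto simp: complement_graph_def fun_eq_iff)
    moreover have "(\<lambda>a b. a \<in> UNIV \<and> b \<in> UNIV \<and> complement_graph E a b)\<^sup>*\<^sup>* x y"
      using conn unfolding graph_connected_def by blast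
    ultimately have "x = y" using rtranclp_false by metis
    with y show False by simp
  next
    case False
    then have T2: "T \<ge> 2" using T1 by simp
    then have t2g: "t \<ge> 2" using tT by simp
    have o1: "A *v ones_on D = real K *\<^sub>R ones_on D" unfolding A_def by (rule ddg_ones[OF ddg0])
    obtain x0 where x0: "x0 \<in> D" using Dne by blast
    have o2: "ones_on D \<noteq> 0" using x0 by (auto simp: ones_on_def vec_eq_iff)
    have o3: "ones_on D \<in> supported_on D" by (simp add: ones_on_def supported_on_def)
    have "eig_mult (supported_on D) A (real K) \<ge> 1" by (rule eig_mult_pos[OF o3 o1 o2])
    then have cnt: "count ({#real k + s#} + replicate_mset (f + 1 - c) r
                        + replicate_mset (c - 1) (r + s) + replicate_mset (g - c) s) (real K) \<ge> 1"
      using spec_Delta unfolding has_spectrum_def by metis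
    have Kcases: "real K = real k + s \<or> real K = r \<or> real K = r + s \<or> real K = s"
    proof (rule ccontr)
      assume "\<not> ?thesis"
      then have "count ({#real k + s#} + replicate_mset (f + 1 - c) r
                        + replicate_mset (c - 1) (r + s) + replicate_mset (g - c) s) (real K) = 0"
        by auto
      with cnt show False by simp
    qed
    have Vpos: "V \<ge> 1"
    proof -
      have "D \<noteq> {}" using x0 by auto
      then have "card D \<noteq> 0" by simp
      then show ?thesis using cardD by simp
    qed
    show False
    proof -
      consider "real K = real k - t" | "real K = 2*t" | "real K = t" | "real K = - t"
        using Kcases r2t t_def by auto
      then show False
      proof cases
        case 1
        have Vmu: "real V * real mu = real k * (real k - 2*t)"
          by (rule arith_Vmu[OF tpos kpos vmu cvt VvC])
        have l2: "real lam2 * real V = (real K)^2 - 4*t^2" using rsq by (simp add: power2_eq_square)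
        have l1: "real lam1 = real K - t^2" using t2 by simp
        have beq: "(real lam1 - real lam2 - t^2 + t) * (real k * (real k - 2*t)) = 3*t^2*real mu"
          by (rule arith_beta[OF Vmu kmu 1 l1 l2])
        have mupos: "real mu > 0"
        proof -
          have "real v * real mu > 0" using vmu kpos tpos by simp
          then show ?thesis using vpos by (simp add: zero_less_mult_iff)
        qed
        have kk: "real k * (real k - 2*t) > 0" using kpos tpos by simp
        have bpos: "real lam1 - real lam2 - t^2 + t > 0"
        proof -
          have q: "3*t^2*real mu > 0" using mupos tpos by simp
          have p: "0 < (real lam1 - real lam2 - t^2 + t) * (real k * (real k - 2*t))"
            using q by (simp only: beq)
          from p kk show ?thesis by (metis zero_less_mult_pos2 mult.commute)
        qed
        define B where "B = int lam1 - int lam2 - T^2 + T"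
        have bB: "real lam1 - real lam2 - t^2 + t = real_of_int B" unfolding B_def tT by simp
        have "B \<ge> 1" using bpos bB by simp
        then have b1: "real lam1 - real lam2 - t^2 + t \<ge> 1" using bB by simp
        show False by (rule arith_final[OF t2g mupos kmu b1 beq kpos])
      next
        case 2
        have "t^2 \<le> 2*t" using t2 2 by simp
        then have "t \<le> 2" using tpos by (simp add: power2_eq_square)
        then have tt: "t = 2" using t2g by simp
        then have "real lam1 = 0" using t2 2 by simp
        moreover have "real lam2 * real V = 0" using rsq 2 by simp
        then have "real lam2 = 0" using Vpos by simp
        ultimately show False using l12 by simp
      next
        case 3
        have "t^2 \<le> t" using t2 3 by simp
        then have "t \<le> 1" using tpos by (simp add: power2_eq_square)
        with t2g show False by simp
      next
        case 4
        then show False using tpos by simp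
      qed
    qed
  qed
qed

end
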